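(* Let $(H,v)$ be a rooted graph. Then for any integers $k\ge 0$ and $g\ge 1$, \[ X_{P^k(K_g,\,H)}=(g-1)!\sum_{l=0}^{g-1}(1-l)\,e_l\,X_{H^{k+g-1-l}}. \]
   Context: All graphs are finite simple graphs. The chromatic symmetric function of a graph $G$ is $X_G=\sum_{\kappa}\prod_{v\in V(G)}x_{\kappa(v)}$, where $\kappa$ ranges over proper colorings $\kappa:V(G)\to\{1,2,\dots\}$. $e_l$ is the $l$-th elementary symmetric function, $e_0=1$. $K_g$ is the complete graph on $g$ vertices, rooted at any vertex. For rooted graphs $(G,u)$, $(H,v)$ and $k\ge 0$, $P^k(G,H)$ is obtained from the disjoint union of $G$ and $H$ by adding a path of length $k$ (with $k-1$ new internal vertices) joining $u$ and $v$ (for $k=0$, $u$ and $v$ are identified). The tailed graph $H^k$ is $P^k(H,K_1)$, i.e., $H$ with a pendant path of length $k$ attached at its root. *)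

theory Defs
  imports Main "HOL-Library.Multiset" "HOL-Library.FuncSet"
begin

definition simple_graph :: "'a set \<Rightarrow> 'a set set \<Rightarrow> bool" where
  "simple_graph V E \<longleftrightarrow> finite V \<and> (\<forall>e\<in>E. e \<subseteq> V \<and> card e = 2)"

text \<open>Symmetric functions (formal power series in the variables x_0, x_1, ...)
  represented by their coefficient function on monomials; a monomial is a
  finite multiset of variable indices.\<close>
type_synonym sym_fun = "nat multiset \<Rightarrow> int"

definition sf_mult :: "sym_fun \<Rightarrow> sym_fun \<Rightarrow> sym_fun" where
  "sf_mult f g \<alpha> = (\<Sum>\<beta>\<in>{\<beta>. \<beta> \<subseteq># \<alpha>}. f \<beta> * g (\<alpha> - \<beta>))"

definition elem_sf :: "nat \<Rightarrow> sym_fun" where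
  "elem_sf l \<alpha> = (if (\<forall>i. count \<alpha> i \<le> 1) \<and> size \<alpha> = l then 1 else 0)"

definition proper_colorings :: "'a set \<Rightarrow> 'a set set \<Rightarrow> ('a \<Rightarrow> nat) set" where
  "proper_colorings V E =
     {\<kappa> \<in> V \<rightarrow>\<^sub>E (UNIV :: nat set). \<forall>e\<in>E. \<forall>x\<in>e. \<forall>y\<in>e. x \<noteq> y \<longrightarrow> \<kappa> x \<noteq> \<kappa> y}"

definition csf :: "'a set \<Rightarrow> 'a set set \<Rightarrow> sym_fun" where
  "csf V E \<alpha> = int (card {\<kappa> \<in> proper_colorings V E. image_mset \<kappa> (mset_set V) = \<alpha>})"

text \<open>Node 0 is the root v of H; nodes
  0,1,...,k form the path of length k; nodes k,...,k+g-1 form the clique K_g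
  (rooted at node k).  For k = 0 the root of K_g is identified with v.\<close>
definition cp_node :: "'a \<Rightarrow> nat \<Rightarrow> 'a + nat" where
  "cp_node v i = (if i = 0 then Inl v else Inr i)"

definition cp_verts :: "'a set \<Rightarrow> nat \<Rightarrow> nat \<Rightarrow> ('a + nat) set" where
  "cp_verts V g k = Inl ` V \<union> Inr ` {1..k+g-1}"

definition cp_edges :: "'a set set \<Rightarrow> 'a \<Rightarrow> nat \<Rightarrow> nat \<Rightarrow> ('a + nat) set set" where
  "cp_edges E v g k =
     (\<lambda>e. Inl ` e) ` E
     \<union> {{cp_node v i, cp_node v (i+1)} | i. i < k}
     \<union> {{cp_node v i, cp_node v j} | i j. k \<le> i \<and> i < j \<and> j \<le> k+g-1}"

text \<open>Tailed graph H^m: H with a pendant path of length m at the root v,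
  new vertices Inr 1, ..., Inr m.\<close>
definition tail_verts :: "'a set \<Rightarrow> nat \<Rightarrow> ('a + nat) set" where
  "tail_verts V m = Inl ` V \<union> Inr ` {1..m}"

definition tail_edges :: "'a set set \<Rightarrow> 'a \<Rightarrow> nat \<Rightarrow> ('a + nat) set set" where
  "tail_edges E v m =
     (\<lambda>e. Inl ` e) ` E \<union> {{cp_node v i, cp_node v (i+1)} | i. i < m}"

end

theory Submission
  imports Defs "HOL-Combinatorics.Multiset_Permutations"
begin

lemma finite_submsets: "finite {\<beta>::'b multiset. \<beta> \<subseteq># \<alpha>}"
proof -
  have "{\<beta>. \<beta> \<subseteq># \<alpha>} \<subseteq> mset ` {xs. set xs \<subseteq> set_mset \<alpha> \<and> length xs \<le> size \<alpha>}"
  proof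
    fix \<beta> assume "\<beta> \<in> {\<beta>. \<beta> \<subseteq># \<alpha>}"
    then have b: "\<beta> \<subseteq># \<alpha>" by simp
    obtain xs where xs: "mset xs = \<beta>" using ex_mset by blast
    have "set xs \<subseteq> set_mset \<alpha>" using b xs by (metis mset_subset_eqD set_mset_mset subsetI)
    moreover have "length xs \<le> size \<alpha>" using b xs by (metis size_mset size_mset_mono)
    ultimately show "\<beta> \<in> mset ` {xs. set xs \<subseteq> set_mset \<alpha> \<and> length xs \<le> size \<alpha>}"
      using xs by blast
  qed
  moreover have "finite {xs. set xs \<subseteq> set_mset \<alpha> \<and> length xs \<le> size \<alpha>}"
    by (rule finite_lists_length_le) simp
  ultimately show ?thesis by (meson finite_imageI finite_subset)
qed

lemma finite_lists_mset: "finite {s. length s = m \<and> mset s = \<gamma> \<and> P s}"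
proof -
  have "{s. length s = m \<and> mset s = \<gamma> \<and> P s} \<subseteq> {s. set s \<subseteq> set_mset \<gamma> \<and> length s = m}"
    by auto
  moreover have "finite {s. set s \<subseteq> set_mset \<gamma> \<and> length s = m}"
    by (rule finite_lists_length_eq) simp
  ultimately show ?thesis by (rule finite_subset)
qed

lemma swap_conv:
  fixes f :: "'k \<Rightarrow> nat multiset" and e :: "nat multiset \<Rightarrow> int"
  assumes fin: "finite {x\<in>X. f x \<subseteq># \<alpha>}"
  shows "(\<Sum>\<beta>\<in>{\<beta>. \<beta> \<subseteq># \<alpha>}. e \<beta> * (\<Sum>x\<in>{x\<in>X. f x \<subseteq># \<alpha> - \<beta>}. h x (\<alpha> - \<beta> - f x)))
       = (\<Sum>x\<in>{x\<in>X. f x \<subseteq># \<alpha>}. \<Sum>\<beta>\<in>{\<beta>. \<beta> \<subseteq># \<alpha> - f x}. e \<beta> * h x (\<alpha> - f x - \<beta>))"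
proof -
  let ?C = "{x\<in>X. f x \<subseteq># \<alpha>}"
  have key: "\<beta> \<subseteq># \<alpha> \<and> f x \<subseteq># \<alpha> - \<beta> \<longleftrightarrow> f x \<subseteq># \<alpha> \<and> \<beta> \<subseteq># \<alpha> - f x" for \<beta> x
    by (auto simp: subseteq_mset_def; metis le_diff_conv2 le_diff_conv add.commute diff_le_self order_trans)
  have "(\<Sum>\<beta>\<in>{\<beta>. \<beta> \<subseteq># \<alpha>}. e \<beta> * (\<Sum>x\<in>{x\<in>X. f x \<subseteq># \<alpha> - \<beta>}. h x (\<alpha> - \<beta> - f x)))
      = (\<Sum>\<beta>\<in>{\<beta>. \<beta> \<subseteq># \<alpha>}. \<Sum>x\<in>?C. if f x \<subseteq># \<alpha> - \<beta> then e \<beta> * h x (\<alpha> - \<beta> - f x) else 0)"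
  proof (rule sum.cong[OF refl])
    fix \<beta> assume "\<beta> \<in> {\<beta>. \<beta> \<subseteq># \<alpha>}"
    then have "{x\<in>X. f x \<subseteq># \<alpha> - \<beta>} = {x\<in>?C. f x \<subseteq># \<alpha> - \<beta>}" using key by auto
    then show "e \<beta> * (\<Sum>x\<in>{x\<in>X. f x \<subseteq># \<alpha> - \<beta>}. h x (\<alpha> - \<beta> - f x))
        = (\<Sum>x\<in>?C. if f x \<subseteq># \<alpha> - \<beta> then e \<beta> * h x (\<alpha> - \<beta> - f x) else 0)"
      unfolding sum_distrib_left by (simp only: sum.inter_filter[OF fin] if_distrib mult_zero_right)
  qed
  also have "\<dots> = (\<Sum>x\<in>?C. \<Sum>\<beta>\<in>{\<beta>. \<beta> \<subseteq># \<alpha>}. if f x \<subseteq># \<alpha> - \<beta> then e \<beta> * h x (\<alpha> - \<beta> - f x) else 0)"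
    by (rule sum.swap)
  also have "\<dots> = (\<Sum>x\<in>?C. \<Sum>\<beta>\<in>{\<beta>. \<beta> \<subseteq># \<alpha> - f x}. e \<beta> * h x (\<alpha> - f x - \<beta>))"
  proof (rule sum.cong[OF refl])
    fix x assume x: "x \<in> ?C"
    have "{\<beta>. \<beta> \<subseteq># \<alpha> - f x} = {\<beta>\<in>{\<beta>. \<beta> \<subseteq># \<alpha>}. f x \<subseteq># \<alpha> - \<beta>}" using key x by auto
    then show "(\<Sum>\<beta>\<in>{\<beta>. \<beta> \<subseteq># \<alpha>}. if f x \<subseteq># \<alpha> - \<beta> then e \<beta> * h x (\<alpha> - \<beta> - f x) else 0)
       = (\<Sum>\<beta>\<in>{\<beta>. \<beta> \<subseteq># \<alpha> - f x}. e \<beta> * h x (\<alpha> - f x - \<beta>))"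
      by (simp add: sum.inter_filter[OF finite_submsets, symmetric] add.commute)
  qed
  finally show ?thesis .
qed


fun chainok :: "nat \<Rightarrow> nat list \<Rightarrow> bool" where
  "chainok c [] = True"
| "chainok c (d # s) = (d \<noteq> c \<and> chainok d s)"

definition Bc :: "nat \<Rightarrow> nat \<Rightarrow> nat multiset \<Rightarrow> int" where
  "Bc m c \<gamma> = int (card {s. length s = m \<and> mset s = \<gamma> \<and> chainok c s})"

definition Dm :: "nat \<Rightarrow> nat \<Rightarrow> nat multiset \<Rightarrow> int" where
  "Dm m c \<gamma> = (if (\<forall>i. count \<gamma> i \<le> 1) \<and> size \<gamma> = m \<and> c \<notin># \<gamma> then 1 else 0)"

lemma Bc_0: "Bc 0 c \<gamma> = (if \<gamma> = {#} then 1 else 0)"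
proof -
  have "{s. length s = 0 \<and> mset s = \<gamma> \<and> chainok c s} = (if \<gamma> = {#} then {[]} else {})"
    by auto
  then show ?thesis unfolding Bc_def by simp
qed

lemma Bc_Suc: "Bc (Suc m) c \<gamma> = (\<Sum>d\<in>set_mset \<gamma> - {c}. Bc m d (\<gamma> - {#d#}))"
proof -
  let ?S = "\<lambda>m c \<gamma>. {s. length s = m \<and> mset s = \<gamma> \<and> chainok c s}"
  have eq: "?S (Suc m) c \<gamma> = (\<Union>d\<in>set_mset \<gamma> - {c}. (\<lambda>s. d # s) ` ?S m d (\<gamma> - {#d#}))"
  proof
    show "?S (Suc m) c \<gamma> \<subseteq> (\<Union>d\<in>set_mset \<gamma> - {c}. (\<lambda>s. d # s) ` ?S m d (\<gamma> - {#d#}))"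
    proof
      fix s assume "s \<in> ?S (Suc m) c \<gamma>"
      then obtain d t where s: "s = d # t" and l: "length t = m" and ms: "add_mset d (mset t) = \<gamma>"
        and ch: "d \<noteq> c" "chainok d t"
        by (cases s) auto
      have "d \<in># \<gamma>" using ms by auto
      moreover have "mset t = \<gamma> - {#d#}" using ms by auto
      ultimately show "s \<in> (\<Union>d\<in>set_mset \<gamma> - {c}. (\<lambda>s. d # s) ` ?S m d (\<gamma> - {#d#}))"
        using s l ch by blast
    qed
  next
    show "(\<Union>d\<in>set_mset \<gamma> - {c}. (\<lambda>s. d # s) ` ?S m d (\<gamma> - {#d#})) \<subseteq> ?S (Suc m) c \<gamma>"
    proof (rule subsetI)
      fix s assume "s \<in> (\<Union>d\<in>set_mset \<gamma> - {c}. (\<lambda>s. d # s) ` ?S m d (\<gamma> - {#d#}))"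
      then obtain d t where d: "d \<in># \<gamma>" "d \<noteq> c" and s: "s = d # t"
        and t: "length t = m" "mset t = \<gamma> - {#d#}" "chainok d t" by blast
      have "mset s = \<gamma>" using s t(2) d(1) by simp
      then show "s \<in> ?S (Suc m) c \<gamma>" using s t d by simp
    qed
  qed
  have "card (?S (Suc m) c \<gamma>) = (\<Sum>d\<in>set_mset \<gamma> - {c}. card ((\<lambda>s. d # s) ` ?S m d (\<gamma> - {#d#})))"
    unfolding eq
    by (rule card_UN_disjoint) (auto intro: finite_lists_mset)
  also have "\<dots> = (\<Sum>d\<in>set_mset \<gamma> - {c}. card (?S m d (\<gamma> - {#d#})))"
    by (rule sum.cong[OF refl]) (simp add: card_image)
  finally show ?thesis unfolding Bc_def by simp
qed

lemma sf_mult_Bc0: "sf_mult e (Bc 0 c) \<gamma> = e \<gamma>"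
proof -
  have "sf_mult e (Bc 0 c) \<gamma> = (\<Sum>\<beta>\<in>{\<beta>. \<beta> \<subseteq># \<gamma>}. if \<beta> = \<gamma> then e \<beta> else 0)"
    unfolding sf_mult_def Bc_0
  proof (rule sum.cong[OF refl])
    fix \<beta> assume "\<beta> \<in> {\<beta>. \<beta> \<subseteq># \<gamma>}"
    then have b: "\<beta> \<subseteq># \<gamma>" by simp
    have "\<gamma> - \<beta> = {#} \<longleftrightarrow> \<beta> = \<gamma>"
    proof
      assume "\<gamma> - \<beta> = {#}"
      then have "\<gamma> = {#} + \<beta>" using b by (metis subset_mset.diff_add)
      then show "\<beta> = \<gamma>" by simp
    qed simp
    then show "e \<beta> * (if \<gamma> - \<beta> = {#} then 1 else 0) = (if \<beta> = \<gamma> then e \<beta> else 0)" by simp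
  qed
  also have "\<dots> = e \<gamma>" using finite_submsets[of \<gamma>] by simp
  finally show ?thesis .
qed

lemma sf_mult_Bc_Suc:
  "sf_mult e (Bc (Suc n) c) \<gamma> = (\<Sum>d\<in>set_mset \<gamma> - {c}. sf_mult e (Bc n d) (\<gamma> - {#d#}))"
proof -
  have s1: "set_mset \<delta> - {c} = {x\<in>-{c}. {#x#} \<subseteq># \<delta>}" for \<delta> :: "nat multiset" by auto
  have fin: "finite {x\<in>-{c}. {#x#} \<subseteq># \<gamma>}" unfolding s1[symmetric] by simp
  have "sf_mult e (Bc (Suc n) c) \<gamma> = (\<Sum>\<beta>\<in>{\<beta>. \<beta> \<subseteq># \<gamma>}. e \<beta> *
      (\<Sum>x\<in>{x\<in>-{c}. {#x#} \<subseteq># \<gamma> - \<beta>}. Bc n x (\<gamma> - \<beta> - {#x#})))"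
    unfolding sf_mult_def Bc_Suc s1 ..
  also have "\<dots> = (\<Sum>x\<in>{x\<in>-{c}. {#x#} \<subseteq># \<gamma>}. \<Sum>\<beta>\<in>{\<beta>. \<beta> \<subseteq># \<gamma> - {#x#}}. e \<beta> * Bc n x (\<gamma> - {#x#} - \<beta>))"
    by (rule swap_conv[OF fin])
  also have "\<dots> = (\<Sum>d\<in>set_mset \<gamma> - {c}. sf_mult e (Bc n d) (\<gamma> - {#d#}))"
    unfolding sf_mult_def s1 ..
  finally show ?thesis .
qed

lemma set_mset_id: "\<forall>i. count \<gamma> i \<le> 1 \<Longrightarrow> mset_set (set_mset \<gamma>) = \<gamma>"
  by (rule multiset_eqI) (metis count_eq_zero_iff count_mset_set(1,3) finite_set_mset le_neq_implies_less less_one)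

lemma D_rec: "Dm (Suc m) c \<gamma> = - int m * elem_sf (Suc m) \<gamma> + (\<Sum>d\<in>set_mset \<gamma> - {c}. Dm m d (\<gamma> - {#d#}))"
proof (cases "(\<forall>i. count \<gamma> i \<le> 1) \<and> size \<gamma> = Suc m")
  case True
  have each: "Dm m d (\<gamma> - {#d#}) = 1" if d: "d \<in># \<gamma>" for d
  proof -
    have c1: "count \<gamma> d \<le> 1" using True by blast
    have c2: "0 < count \<gamma> d" using d by simp
    have "\<forall>i. count (\<gamma> - {#d#}) i \<le> 1" using True by auto
    moreover have "size (\<gamma> - {#d#}) = m" using True d by (simp add: size_Diff_singleton)
    moreover have "count \<gamma> d = 1" using c1 c2 by arith
    then have "d \<notin># \<gamma> - {#d#}" by (simp add: not_in_iff)
    ultimately show ?thesis unfolding Dm_def by simp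
  qed
  have card: "card (set_mset \<gamma>) = Suc m"
    using True set_mset_id[of \<gamma>] by (metis size_mset_set)
  have "(\<Sum>d\<in>set_mset \<gamma> - {c}. Dm m d (\<gamma> - {#d#})) = int (card (set_mset \<gamma> - {c}))"
    using each by simp
  also have "\<dots> = (if c \<in># \<gamma> then int m else int m + 1)"
    using card by (simp add: card_Diff_singleton_if)
  finally show ?thesis using True unfolding Dm_def elem_sf_def by auto
next
  case False
  have each: "Dm m d (\<gamma> - {#d#}) = 0" if d: "d \<in># \<gamma>" for d
  proof (rule ccontr)
    assume "Dm m d (\<gamma> - {#d#}) \<noteq> 0"
    then have h: "\<forall>i. count (\<gamma> - {#d#}) i \<le> 1" "size (\<gamma> - {#d#}) = m" "d \<notin># \<gamma> - {#d#}"
      unfolding Dm_def by (auto split: if_splits)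
    have g: "\<gamma> = add_mset d (\<gamma> - {#d#})" using d by simp
    have "\<forall>i. count \<gamma> i \<le> 1"
    proof
      fix i
      have "count \<gamma> i = count (add_mset d (\<gamma> - {#d#})) i"
        by (rule arg_cong[where f="\<lambda>M. count M i", OF g])
      then show "count \<gamma> i \<le> 1"
        using h(1)[rule_format, of i] h(3) by (cases "i = d") (auto simp: not_in_iff)
    qed
    moreover have "size \<gamma> = Suc m" using g h(2) by (metis size_add_mset)
    ultimately show False using False by simp
  qed
  have "Dm (Suc m) c \<gamma> = 0" using False unfolding Dm_def by auto
  moreover have "elem_sf (Suc m) \<gamma> = 0" using False unfolding elem_sf_def by auto
  ultimately show ?thesis using each by simp
qed


lemma D_ident: "Dm m c \<gamma> = (\<Sum>l=0..m. (1 - int l) * sf_mult (elem_sf l) (Bc (m - l) c) \<gamma>)"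
proof (induction m arbitrary: c \<gamma>)
  case 0
  have "Dm 0 c \<gamma> = elem_sf 0 \<gamma>" by (simp add: Dm_def elem_sf_def)
  then show ?case by (simp add: sf_mult_Bc0)
next
  case (Suc m)
  let ?F = "\<lambda>l. (1 - int l) * sf_mult (elem_sf l) (Bc (Suc m - l) c) \<gamma>"
  have A: "sum ?F {0..Suc m} = sum ?F {0..m} + ?F (Suc m)"
    by (rule sum.atLeast0_atMost_Suc)
  have B: "?F (Suc m) = - int m * elem_sf (Suc m) \<gamma>"
    by (simp add: sf_mult_Bc0)
  have "sum ?F {0..m}
      = (\<Sum>l=0..m. \<Sum>d\<in>set_mset \<gamma> - {c}. (1 - int l) * sf_mult (elem_sf l) (Bc (m - l) d) (\<gamma> - {#d#}))"
  proof (rule sum.cong[OF refl])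
    fix l assume "l \<in> {0..m}"
    then have "Suc m - l = Suc (m - l)" by auto
    then show "?F l =
      (\<Sum>d\<in>set_mset \<gamma> - {c}. (1 - int l) * sf_mult (elem_sf l) (Bc (m - l) d) (\<gamma> - {#d#}))"
      by (simp only: sf_mult_Bc_Suc sum_distrib_left)
  qed
  also have "\<dots> = (\<Sum>d\<in>set_mset \<gamma> - {c}. \<Sum>l=0..m. (1 - int l) * sf_mult (elem_sf l) (Bc (m - l) d) (\<gamma> - {#d#}))"
    by (rule sum.swap)
  also have "\<dots> = (\<Sum>d\<in>set_mset \<gamma> - {c}. Dm m d (\<gamma> - {#d#}))"
    by (simp only: Suc.IH)
  finally have C: "sum ?F {0..m} = (\<Sum>d\<in>set_mset \<gamma> - {c}. Dm m d (\<gamma> - {#d#}))" .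
  show ?case unfolding A B C D_rec by simp
qed

lemma card_distinct_lists:
  "int (card {s. length s = n \<and> mset s = \<gamma> \<and> distinct (c # s)}) = int (fact n) * Dm n c \<gamma>"
proof (cases "(\<forall>i. count \<gamma> i \<le> 1) \<and> size \<gamma> = n \<and> c \<notin># \<gamma>")
  case True
  have "{s. length s = n \<and> mset s = \<gamma> \<and> distinct (c # s)} = permutations_of_set (set_mset \<gamma>)"
  proof
    show "{s. length s = n \<and> mset s = \<gamma> \<and> distinct (c # s)} \<subseteq> permutations_of_set (set_mset \<gamma>)"
      by (auto simp: permutations_of_set_def)
    show "permutations_of_set (set_mset \<gamma>) \<subseteq> {s. length s = n \<and> mset s = \<gamma> \<and> distinct (c # s)}"
    proof
      fix s assume "s \<in> permutations_of_set (set_mset \<gamma>)"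
      then have s: "set s = set_mset \<gamma>" "distinct s" by (auto simp: permutations_of_set_def)
      have "mset s = \<gamma>" using s set_mset_id[of \<gamma>] True by (metis mset_set_set)
      moreover then have "length s = n" using True by (metis size_mset)
      ultimately show "s \<in> {s. length s = n \<and> mset s = \<gamma> \<and> distinct (c # s)}"
        using s True by auto
    qed
  qed
  moreover have "card (set_mset \<gamma>) = n" using True set_mset_id[of \<gamma>] by (metis size_mset_set)
  ultimately show ?thesis using True by (simp add: Dm_def)
next
  case False
  have E: "{s. length s = n \<and> mset s = \<gamma> \<and> distinct (c # s)} = {}"
  proof (rule ccontr)
    assume "{s. length s = n \<and> mset s = \<gamma> \<and> distinct (c # s)} \<noteq> {}"
    then obtain s where s: "length s = n" "mset s = \<gamma>" "distinct (c # s)" by blast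
    have ds: "distinct s" using s(3) by simp
    have "\<forall>i. count \<gamma> i \<le> 1" using ds s(2) by (simp add: distinct_count_atmost_1)
    moreover have "size \<gamma> = n" using s by auto
    moreover have "c \<notin># \<gamma>" using s by auto
    ultimately show False using False by simp
  qed
  moreover have "Dm n c \<gamma> = 0" using False unfolding Dm_def by simp
  ultimately show ?thesis unfolding E by simp
qed


definition okE :: "'b set set \<Rightarrow> ('b \<Rightarrow> nat) \<Rightarrow> bool" where
  "okE E f = (\<forall>e\<in>E. \<forall>x\<in>e. \<forall>y\<in>e. x \<noteq> y \<longrightarrow> f x \<noteq> f y)"

lemma proper_colorings_okE: "proper_colorings V E = {\<kappa> \<in> V \<rightarrow>\<^sub>E (UNIV :: nat set). okE E \<kappa>}"
  by (simp add: proper_colorings_def okE_def)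

lemma okE_Un: "okE (A \<union> B) f = (okE A f \<and> okE B f)"
  unfolding okE_def by blast

lemma okE_cong: "(\<And>e x. e \<in> F \<Longrightarrow> x \<in> e \<Longrightarrow> f x = g x) \<Longrightarrow> okE F f = okE F g"
  unfolding okE_def by metis

definition extc :: "('a + nat \<Rightarrow> nat) \<Rightarrow> nat list \<Rightarrow> ('a + nat) set \<Rightarrow> nat \<Rightarrow> nat \<Rightarrow> ('a + nat \<Rightarrow> nat)" where
  "extc \<kappa> s W k m x = (if x \<in> W then \<kappa> x else (case x of Inl a \<Rightarrow> undefined
      | Inr j \<Rightarrow> if k < j \<and> j \<le> k + m then s ! (j - k - 1) else undefined))"

lemma ivl_shift: "{k+1..k+m} = (\<lambda>i. i + k + 1) ` {0..<(m::nat)}"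
proof
  show "{k+1..k+m} \<subseteq> (\<lambda>i. i + k + 1) ` {0..<m}"
  proof
    fix j assume "j \<in> {k+1..k+m}"
    then have "j = (j - k - 1) + k + 1" "j - k - 1 \<in> {0..<m}" by auto
    then show "j \<in> (\<lambda>i. i + k + 1) ` {0..<m}" by blast
  qed
qed auto

lemma mset_nth_shift:
  assumes "length s = m"
  shows "image_mset (\<lambda>j. s ! (j - k - 1)) (mset_set {k+1..k+m}) = mset s"
proof -
  have inj: "inj_on (\<lambda>i. i + k + 1) {0..<m}" by (auto simp: inj_on_def)
  have "image_mset (\<lambda>j. s ! (j - k - 1)) (mset_set {k+1..k+m})
      = image_mset (\<lambda>j. s ! (j - k - 1)) (image_mset (\<lambda>i. i + k + 1) (mset_set {0..<m}))"
    unfolding ivl_shift image_mset_mset_set[OF inj] ..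
  also have "\<dots> = image_mset (nth s) (mset_set {0..<m})"
    by (simp add: multiset.map_comp o_def)
  also have "\<dots> = mset (map (nth s) [0..<m])" by (simp only: mset_map mset_upt)
  also have "\<dots> = mset s" using assms map_nth[of s] by (simp only:)
  finally show ?thesis .
qed

lemma extc_img:
  assumes fW: "finite W" and disj: "W \<inter> Inr ` {k+1..k+m} = {}" and l: "length s = m"
  shows "image_mset (extc \<kappa> s W k m) (mset_set (W \<union> Inr ` {k+1..k+m}))
       = image_mset \<kappa> (mset_set W) + mset s"
proof -
  have "mset_set (W \<union> Inr ` {k+1..k+m}) = mset_set W + mset_set (Inr ` {k+1..k+m})"
    using fW disj by (simp add: mset_set_Union)
  moreover have "image_mset (extc \<kappa> s W k m) (mset_set W) = image_mset \<kappa> (mset_set W)"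
    using fW by (intro image_mset_cong) (simp add: extc_def)
  moreover have "image_mset (extc \<kappa> s W k m) (mset_set (Inr ` {k+1..k+m})) = mset s"
  proof -
    have eqI: "mset_set (Inr ` {k+1..k+m}) = image_mset Inr (mset_set {k+1..k+m})"
      by (simp add: image_mset_mset_set)
    have "image_mset (extc \<kappa> s W k m) (mset_set (Inr ` {k+1..k+m}))
        = image_mset (\<lambda>j. extc \<kappa> s W k m (Inr j)) (mset_set {k+1..k+m})"
      unfolding eqI by (simp add: multiset.map_comp o_def)
    also have "\<dots> = image_mset (\<lambda>j. s ! (j - k - 1)) (mset_set {k+1..k+m})"
    proof (intro image_mset_cong)
      fix j assume "j \<in># mset_set {k+1..k+m}"
      then have j: "k < j" "j \<le> k + m" by auto
      then have "Inr j \<notin> W" using disj by auto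
      then show "extc \<kappa> s W k m (Inr j) = s ! (j - k - 1)" using j by (simp add: extc_def)
    qed
    also have "\<dots> = mset s" by (rule mset_nth_shift[OF l])
    finally show ?thesis .
  qed
  ultimately show ?thesis by simp
qed

lemma extc_PiE:
  assumes "\<kappa> \<in> W \<rightarrow>\<^sub>E (UNIV :: nat set)"
  shows "extc \<kappa> s W k m \<in> (W \<union> Inr ` {k+1..k+m}) \<rightarrow>\<^sub>E (UNIV :: nat set)"
proof -
  have "extc \<kappa> s W k m x = undefined" if x: "x \<notin> W \<union> Inr ` {k+1..k+m}" for x
  proof (cases x)
    case (Inl a)
    then show ?thesis using x by (simp add: extc_def)
  next
    case (Inr j)
    then have "\<not> (k < j \<and> j \<le> k + m)" using x by auto
    then show ?thesis using x Inr by (auto simp: extc_def)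
  qed
  then show ?thesis by (auto simp: PiE_iff extensional_def)
qed


lemma glue:
  fixes W :: "('a + nat) set" and F E2 :: "('a + nat) set set"
  assumes fW: "finite W" and disj: "W \<inter> Inr ` {k+1..k+m} = {}" and FW: "\<forall>e\<in>F. e \<subseteq> W"
  shows "csf (W \<union> Inr ` {k+1..k+m}) (F \<union> E2) \<alpha> =
    (\<Sum>\<kappa>\<in>{\<kappa>\<in>proper_colorings W F. image_mset \<kappa> (mset_set W) \<subseteq># \<alpha>}.
       int (card {s. length s = m \<and> mset s = \<alpha> - image_mset \<kappa> (mset_set W)
                      \<and> okE E2 (extc \<kappa> s W k m)}))"
proof -
  let ?U = "Inr ` {k+1..k+m} :: ('a + nat) set"
  let ?img = "\<lambda>\<kappa>. image_mset \<kappa> (mset_set W)"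
  let ?C = "{\<kappa>\<in>proper_colorings W F. ?img \<kappa> \<subseteq># \<alpha>}"
  let ?S = "\<lambda>\<kappa>. {s. length s = m \<and> mset s = \<alpha> - ?img \<kappa> \<and> okE E2 (extc \<kappa> s W k m)}"
  let ?Phi = "\<lambda>p. extc (fst p) (snd p) W k m"
  let ?L = "{\<kappa>' \<in> proper_colorings (W \<union> ?U) (F \<union> E2). image_mset \<kappa>' (mset_set (W \<union> ?U)) = \<alpha>}"
  have okF: "okE F (extc \<kappa> s W k m) = okE F \<kappa>" for \<kappa> s
    by (rule okE_cong) (use FW in \<open>auto simp: extc_def\<close>)
  have finC: "finite ?C"
  proof (rule finite_subset)
    show "?C \<subseteq> W \<rightarrow>\<^sub>E set_mset \<alpha>"
    proof
      fix \<kappa> assume k: "\<kappa> \<in> ?C"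
      then have "\<kappa> \<in> W \<rightarrow>\<^sub>E UNIV" by (simp add: proper_colorings_def)
      moreover have "\<kappa> x \<in># \<alpha>" if "x \<in> W" for x
      proof -
        have "\<kappa> x \<in># ?img \<kappa>" using that fW by simp
        moreover have "?img \<kappa> \<subseteq># \<alpha>" using k by simp
        ultimately show ?thesis by (rule mset_subset_eqD[rotated])
      qed
      ultimately show "\<kappa> \<in> W \<rightarrow>\<^sub>E set_mset \<alpha>" by (auto simp: PiE_iff)
    qed
    show "finite (W \<rightarrow>\<^sub>E set_mset \<alpha>)" using fW by (simp add: finite_PiE)
  qed
  have finS: "\<forall>\<kappa>\<in>?C. finite (?S \<kappa>)" by (auto intro: finite_lists_mset)
  have L_eq: "?L = ?Phi ` Sigma ?C ?S"
  proof
    show "?Phi ` Sigma ?C ?S \<subseteq> ?L"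
    proof
      fix x assume "x \<in> ?Phi ` Sigma ?C ?S"
      then obtain \<kappa> s where x: "x = extc \<kappa> s W k m" and k: "\<kappa> \<in> ?C" and s: "s \<in> ?S \<kappa>" by auto
      have kP: "\<kappa> \<in> W \<rightarrow>\<^sub>E UNIV" "okE F \<kappa>" using k by (auto simp: proper_colorings_okE)
      have "x \<in> (W \<union> ?U) \<rightarrow>\<^sub>E UNIV" using x extc_PiE[OF kP(1)] by simp
      moreover have "okE (F \<union> E2) x" using x kP(2) s okF by (simp add: okE_Un)
      moreover have "image_mset x (mset_set (W \<union> ?U)) = \<alpha>"
      proof -
        have "image_mset x (mset_set (W \<union> ?U)) = ?img \<kappa> + mset s"
          using x extc_img[OF fW disj] s by simp
        also have "\<dots> = \<alpha>" using s k by (simp add: subset_mset.add_diff_inverse)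
        finally show ?thesis .
      qed
      ultimately show "x \<in> ?L" by (simp add: proper_colorings_okE)
    qed
  next
    show "?L \<subseteq> ?Phi ` Sigma ?C ?S"
    proof
      fix x assume xL: "x \<in> ?L"
      have xP: "x \<in> (W \<union> ?U) \<rightarrow>\<^sub>E UNIV" "okE (F \<union> E2) x" "image_mset x (mset_set (W \<union> ?U)) = \<alpha>"
        using xL by (auto simp: proper_colorings_okE)
      define \<kappa> where "\<kappa> = restrict x W"
      define s where "s = map (\<lambda>i. x (Inr (k + 1 + i))) [0..<m]"
      have ls: "length s = m" by (simp add: s_def)
      have kE: "\<kappa> \<in> W \<rightarrow>\<^sub>E UNIV" by (simp add: \<kappa>_def)
      have xe: "extc \<kappa> s W k m = x"
      proof (rule PiE_ext[OF extc_PiE[OF kE] xP(1)])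
        fix y assume y: "y \<in> W \<union> ?U"
        show "extc \<kappa> s W k m y = x y"
        proof (cases "y \<in> W")
          case True then show ?thesis by (simp add: extc_def \<kappa>_def)
        next
          case False
          then obtain j where j: "y = Inr j" "k < j" "j \<le> k + m" using y by auto
          then have jl: "j - k - 1 < m" by arith
          then have "s ! (j - k - 1) = x (Inr (k + 1 + (j - k - 1)))" by (simp add: s_def)
          also have "k + 1 + (j - k - 1) = j" using j by arith
          finally have "s ! (j - k - 1) = x (Inr j)" .
          then show ?thesis using False j by (simp add: extc_def)
        qed
      qed
      have okFk: "okE F \<kappa>" using xP(2) okF[of \<kappa> s] xe by (simp add: okE_Un)
      have imgs: "?img \<kappa> + mset s = \<alpha>" using extc_img[OF fW disj ls, of \<kappa>] xe xP(3) by simp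
      have "\<kappa> \<in> ?C" using kE okFk imgs by (auto simp: proper_colorings_okE)
      moreover have "s \<in> ?S \<kappa>" using ls imgs xe xP(2) by (auto simp: okE_Un)
      ultimately show "x \<in> ?Phi ` Sigma ?C ?S" using xe by force
    qed
  qed
  have inj: "inj_on ?Phi (Sigma ?C ?S)"
  proof (rule inj_onI)
    fix p q assume p: "p \<in> Sigma ?C ?S" and q: "q \<in> Sigma ?C ?S" and e: "?Phi p = ?Phi q"
    obtain \<kappa>1 s1 where p1: "p = (\<kappa>1, s1)" by (cases p)
    obtain \<kappa>2 s2 where q1: "q = (\<kappa>2, s2)" by (cases q)
    have k1: "\<kappa>1 \<in> W \<rightarrow>\<^sub>E UNIV" "length s1 = m" using p p1 by (auto simp: proper_colorings_okE)
    have k2: "\<kappa>2 \<in> W \<rightarrow>\<^sub>E UNIV" "length s2 = m" using q q1 by (auto simp: proper_colorings_okE)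
    have e': "extc \<kappa>1 s1 W k m y = extc \<kappa>2 s2 W k m y" for y using e p1 q1 by simp
    have "\<kappa>1 = \<kappa>2"
    proof (rule PiE_ext[OF k1(1) k2(1)])
      fix y assume "y \<in> W" then show "\<kappa>1 y = \<kappa>2 y" using e'[of y] by (simp add: extc_def)
    qed
    moreover have "s1 = s2"
    proof (rule nth_equalityI)
      show "length s1 = length s2" using k1 k2 by simp
      fix i assume i: "i < length s1"
      have "Inr (k + 1 + i) \<notin> W" using disj i k1 by auto
      then show "s1 ! i = s2 ! i" using e'[of "Inr (k + 1 + i)"] i k1 k2 by (simp add: extc_def)
    qed
    ultimately show "p = q" using p1 q1 by simp
  qed
  have "csf (W \<union> ?U) (F \<union> E2) \<alpha> = int (card ?L)" by (simp add: csf_def)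
  also have "\<dots> = int (card (Sigma ?C ?S))" unfolding L_eq by (simp add: card_image[OF inj])
  also have "\<dots> = int (\<Sum>\<kappa>\<in>?C. card (?S \<kappa>))" using finC finS by simp
  also have "\<dots> = (\<Sum>\<kappa>\<in>?C. int (card (?S \<kappa>)))" by simp
  finally show ?thesis .
qed


lemma finite_C:
  assumes fW: "finite W"
  shows "finite {\<kappa>\<in>proper_colorings W F. image_mset \<kappa> (mset_set W) \<subseteq># \<alpha>}"
proof (rule finite_subset)
  show "{\<kappa>\<in>proper_colorings W F. image_mset \<kappa> (mset_set W) \<subseteq># \<alpha>} \<subseteq> W \<rightarrow>\<^sub>E set_mset \<alpha>"
  proof
    fix \<kappa> assume k: "\<kappa> \<in> {\<kappa>\<in>proper_colorings W F. image_mset \<kappa> (mset_set W) \<subseteq># \<alpha>}"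
    then have "\<kappa> \<in> W \<rightarrow>\<^sub>E UNIV" by (simp add: proper_colorings_def)
    moreover have "\<kappa> x \<in># \<alpha>" if "x \<in> W" for x
    proof -
      have "\<kappa> x \<in># image_mset \<kappa> (mset_set W)" using that fW by simp
      moreover have "image_mset \<kappa> (mset_set W) \<subseteq># \<alpha>" using k by simp
      ultimately show ?thesis by (rule mset_subset_eqD[rotated])
    qed
    ultimately show "\<kappa> \<in> W \<rightarrow>\<^sub>E set_mset \<alpha>" by (auto simp: PiE_iff)
  qed
  show "finite (W \<rightarrow>\<^sub>E set_mset \<alpha>)" using fW by (simp add: finite_PiE)
qed

lemma cp_node_eq: "cp_node v i = cp_node v j \<longleftrightarrow> i = j"
  by (auto simp: cp_node_def)

lemma tail_verts_split: "tail_verts V (k + m) = tail_verts V k \<union> Inr ` {k+1..k+m}"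
proof -
  have "{1..k+m} = {1..k} \<union> {k+1..k+m}" by auto
  then show ?thesis unfolding tail_verts_def by (simp add: image_Un Un_assoc)
qed

lemma cp_verts_split: "g \<ge> 1 \<Longrightarrow> cp_verts V g k = tail_verts V k \<union> Inr ` {k+1..k+(g-1)}"
  using tail_verts_split[of V k "g-1"] unfolding tail_verts_def cp_verts_def by simp

lemma tail_disj: "tail_verts V k \<inter> Inr ` {k+1..k+m} = {}"
  unfolding tail_verts_def by auto

lemma finite_tail: "finite V \<Longrightarrow> finite (tail_verts V k)"
  unfolding tail_verts_def by simp

lemma tail_edges_sub:
  assumes "simple_graph V E" "v \<in> V"
  shows "\<forall>e\<in>tail_edges E v k. e \<subseteq> tail_verts V k"
proof
  fix e assume e: "e \<in> tail_edges E v k"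
  have nd: "cp_node v i \<in> tail_verts V k" if "i \<le> k" for i
    using that assms(2) by (auto simp: cp_node_def tail_verts_def)
  show "e \<subseteq> tail_verts V k"
  proof (cases "e \<in> (\<lambda>e. Inl ` e) ` E")
    case True
    then obtain e0 where "e = Inl ` e0" "e0 \<in> E" by blast
    then show ?thesis using assms(1) unfolding simple_graph_def tail_verts_def by auto
  next
    case False
    then obtain i where "e = {cp_node v i, cp_node v (i+1)}" "i < k" using e unfolding tail_edges_def by blast
    then show ?thesis using nd by auto
  qed
qed

lemma compr_split: "(\<And>i. P i \<longleftrightarrow> Q i \<or> R i) \<Longrightarrow> {f i | i. P i} = {f i | i. Q i} \<union> {f i | i. R i}"
  by blast

lemma tail_edges_split:
  "tail_edges E v (k + m) = tail_edges E v k \<union> {{cp_node v i, cp_node v (i+1)} | i. k \<le> i \<and> i < k + m}"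
proof -
  have "{{cp_node v i, cp_node v (i+1)} | i. i < k + m} = {{cp_node v i, cp_node v (i+1)} | i. i < k} \<union> {{cp_node v i, cp_node v (i+1)} | i. k \<le> i \<and> i < k + m}"
    by (rule compr_split) auto
  then show ?thesis unfolding tail_edges_def by (simp only: Un_assoc)
qed

lemma cp_edges_split:
  "g \<ge> 1 \<Longrightarrow> cp_edges E v g k = tail_edges E v k \<union>
     {{cp_node v i, cp_node v j} | i j. k \<le> i \<and> i < j \<and> j \<le> k + (g - 1)}"
proof -
  assume "g \<ge> 1"
  then have h: "k + g - 1 = k + (g - 1)" by simp
  show ?thesis unfolding tail_edges_def cp_edges_def h ..
qed

lemma okE_path: "okE {{a i, b i} | i. P i} f \<longleftrightarrow> (\<forall>i. P i \<longrightarrow> a i \<noteq> b i \<longrightarrow> f (a i) \<noteq> f (b i))"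
  unfolding okE_def by auto

lemma okE_pairs: "okE {{a i j, b i j} | i j. P i j} f \<longleftrightarrow> (\<forall>i j. P i j \<longrightarrow> a i j \<noteq> b i j \<longrightarrow> f (a i j) \<noteq> f (b i j))"
  unfolding okE_def by auto metis

lemma reidx1: fixes k m :: nat shows "(\<forall>i. k \<le> i \<and> i < k + m \<longrightarrow> P i) \<longleftrightarrow> (\<forall>j<m. P (k + j))"
proof
  assume h: "\<forall>j<m. P (k + j)"
  show "\<forall>i. k \<le> i \<and> i < k + m \<longrightarrow> P i"
  proof (intro allI impI)
    fix i assume i: "k \<le> i \<and> i < k + m"
    then have "i - k < m" "k + (i - k) = i" by auto
    then show "P i" using h by metis
  qed
qed auto

lemma reidx2: fixes k m :: nat shows "(\<forall>i j. k \<le> i \<and> i < j \<and> j \<le> k + m \<longrightarrow> P i j) \<longleftrightarrow> (\<forall>i j. i < j \<and> j \<le> m \<longrightarrow> P (k + i) (k + j))"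
proof
  assume h: "\<forall>i j. i < j \<and> j \<le> m \<longrightarrow> P (k + i) (k + j)"
  show "\<forall>i j. k \<le> i \<and> i < j \<and> j \<le> k + m \<longrightarrow> P i j"
  proof (intro allI impI)
    fix i j assume i: "k \<le> i \<and> i < j \<and> j \<le> k + m"
    then have "i - k < j - k" "j - k \<le> m" "k + (i - k) = i" "k + (j - k) = j" by auto
    then show "P i j" using h by metis
  qed
qed auto

lemma chainok_nth: "chainok c s \<longleftrightarrow> (\<forall>j<length s. (c # s) ! j \<noteq> (c # s) ! Suc j)"
proof (induction s arbitrary: c)
  case Nil then show ?case by simp
next
  case (Cons d s)
  show ?case by (simp add: Cons.IH All_less_Suc2 eq_commute)
qed

lemma extc_node:
  assumes "v \<in> V" "length s = m" "i \<le> m"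
  shows "extc \<kappa> s (tail_verts V k) k m (cp_node v (k + i)) = (\<kappa> (cp_node v k) # s) ! i"
proof (cases i)
  case 0
  have "cp_node v k \<in> tail_verts V k" using assms(1) by (auto simp: cp_node_def tail_verts_def)
  then show ?thesis using 0 by (simp add: extc_def)
next
  case (Suc j)
  have n: "cp_node v (k + i) = Inr (k + i)" using Suc by (simp add: cp_node_def)
  have "Inr (k + i) \<notin> tail_verts V k" using Suc by (auto simp: tail_verts_def)
  then show ?thesis using n Suc assms by (simp add: extc_def)
qed

lemma okE_tail:
  assumes "v \<in> V" "length s = m"
  shows "okE {{cp_node v i, cp_node v (i+1)} | i. k \<le> i \<and> i < k + m} (extc \<kappa> s (tail_verts V k) k m)
     \<longleftrightarrow> chainok (\<kappa> (cp_node v k)) s"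
proof -
  let ?f = "extc \<kappa> s (tail_verts V k) k m"
  let ?t = "\<kappa> (cp_node v k) # s"
  have "okE {{cp_node v i, cp_node v (i+1)} | i. k \<le> i \<and> i < k + m} ?f
      \<longleftrightarrow> (\<forall>i. k \<le> i \<and> i < k + m \<longrightarrow> ?f (cp_node v i) \<noteq> ?f (cp_node v (i+1)))"
    by (simp add: okE_path cp_node_eq)
  also have "\<dots> \<longleftrightarrow> (\<forall>j<m. ?f (cp_node v (k + j)) \<noteq> ?f (cp_node v (k + j + 1)))"
    by (rule reidx1)
  also have "\<dots> \<longleftrightarrow> (\<forall>j<m. ?t ! j \<noteq> ?t ! Suc j)"
  proof -
    have "?f (cp_node v (k + j)) = ?t ! j" "?f (cp_node v (k + j + 1)) = ?t ! Suc j" if "j < m" for j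
      using extc_node[OF assms, of j \<kappa> k] extc_node[OF assms, of "Suc j" \<kappa> k] that by auto
    then show ?thesis by auto
  qed
  also have "\<dots> \<longleftrightarrow> chainok (\<kappa> (cp_node v k)) s" using assms(2) by (simp add: chainok_nth)
  finally show ?thesis .
qed

lemma distinct_lt: "distinct t \<longleftrightarrow> (\<forall>i j. i < j \<and> j < length t \<longrightarrow> t ! i \<noteq> t ! j)"
proof
  assume d: "distinct t"
  show "\<forall>i j. i < j \<and> j < length t \<longrightarrow> t ! i \<noteq> t ! j"
  proof (intro allI impI)
    fix i j assume "i < j \<and> j < length t"
    then show "t ! i \<noteq> t ! j" using d by (simp add: nth_eq_iff_index_eq)
  qed
next
  assume h: "\<forall>i j. i < j \<and> j < length t \<longrightarrow> t ! i \<noteq> t ! j"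
  show "distinct t" unfolding distinct_conv_nth
  proof (intro allI impI)
    fix i j assume ij: "i < length t" "j < length t" "i \<noteq> j"
    show "t ! i \<noteq> t ! j"
    proof (cases "i < j")
      case True then show ?thesis using h ij by blast
    next
      case False then have "j < i" using ij by simp
      then have "t ! j \<noteq> t ! i" using h ij by blast
      then show ?thesis by simp
    qed
  qed
qed

lemma okE_clique:
  assumes "v \<in> V" "length s = m"
  shows "okE {{cp_node v i, cp_node v j} | i j. k \<le> i \<and> i < j \<and> j \<le> k + m} (extc \<kappa> s (tail_verts V k) k m)
     \<longleftrightarrow> distinct (\<kappa> (cp_node v k) # s)"
proof -
  let ?f = "extc \<kappa> s (tail_verts V k) k m"
  let ?t = "\<kappa> (cp_node v k) # s"
  have "okE {{cp_node v i, cp_node v j} | i j. k \<le> i \<and> i < j \<and> j \<le> k + m} ?f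
      \<longleftrightarrow> (\<forall>i j. k \<le> i \<and> i < j \<and> j \<le> k + m \<longrightarrow> ?f (cp_node v i) \<noteq> ?f (cp_node v j))"
    by (simp add: okE_pairs cp_node_eq)
  also have "\<dots> \<longleftrightarrow> (\<forall>i j. i < j \<and> j \<le> m \<longrightarrow> ?f (cp_node v (k + i)) \<noteq> ?f (cp_node v (k + j)))"
    by (rule reidx2)
  also have "\<dots> \<longleftrightarrow> (\<forall>i j. i < j \<and> j \<le> m \<longrightarrow> ?t ! i \<noteq> ?t ! j)"
  proof -
    have H: "?f (cp_node v (k + i)) = ?t ! i" if "i \<le> m" for i
      using extc_node[OF assms that] .
    have "(?f (cp_node v (k + i)) \<noteq> ?f (cp_node v (k + j))) \<longleftrightarrow> (?t ! i \<noteq> ?t ! j)"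
      if "i < j \<and> j \<le> m" for i j
    proof -
      have "i \<le> m" "j \<le> m" using that by auto
      then show ?thesis using H by simp
    qed
    then show ?thesis by blast
  qed
  also have "\<dots> \<longleftrightarrow> distinct ?t"
  proof -
    have "length ?t = Suc m" using assms(2) by simp
    then have "(\<forall>i j. i < j \<and> j \<le> m \<longrightarrow> ?t ! i \<noteq> ?t ! j) \<longleftrightarrow> (\<forall>i j. i < j \<and> j < length ?t \<longrightarrow> ?t ! i \<noteq> ?t ! j)"
      by (simp add: less_Suc_eq_le)
    also have "\<dots> \<longleftrightarrow> distinct ?t" by (rule distinct_lt[symmetric])
    finally show ?thesis .
  qed
  finally show ?thesis .
qed


lemma tail_csf:
  assumes sg: "simple_graph V E" and v: "v \<in> V"
  shows "csf (tail_verts V (k + m)) (tail_edges E v (k + m)) \<delta> =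
    (\<Sum>\<kappa>\<in>{\<kappa>\<in>proper_colorings (tail_verts V k) (tail_edges E v k).
          image_mset \<kappa> (mset_set (tail_verts V k)) \<subseteq># \<delta>}.
       Bc m (\<kappa> (cp_node v k)) (\<delta> - image_mset \<kappa> (mset_set (tail_verts V k))))"
proof -
  have fV: "finite V" using sg by (simp add: simple_graph_def)
  show ?thesis
    unfolding tail_verts_split tail_edges_split
    unfolding glue[OF finite_tail[OF fV] tail_disj tail_edges_sub[OF sg v]]
  proof (rule sum.cong[OF refl])
    fix \<kappa>
    have "{s. length s = m \<and> mset s = \<delta> - image_mset \<kappa> (mset_set (tail_verts V k)) \<and>
             okE {{cp_node v i, cp_node v (i + 1)} |i. k \<le> i \<and> i < k + m} (extc \<kappa> s (tail_verts V k) k m)}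
        = {s. length s = m \<and> mset s = \<delta> - image_mset \<kappa> (mset_set (tail_verts V k)) \<and>
             chainok (\<kappa> (cp_node v k)) s}"
      using okE_tail[OF v] by blast
    then show "int (card {s. length s = m \<and> mset s = \<delta> - image_mset \<kappa> (mset_set (tail_verts V k)) \<and>
             okE {{cp_node v i, cp_node v (i + 1)} |i. k \<le> i \<and> i < k + m} (extc \<kappa> s (tail_verts V k) k m)})
        = Bc m (\<kappa> (cp_node v k)) (\<delta> - image_mset \<kappa> (mset_set (tail_verts V k)))"
      by (simp only: Bc_def)
  qed
qed

lemma cp_csf:
  assumes sg: "simple_graph V E" and v: "v \<in> V" and g: "g \<ge> 1"
  shows "csf (cp_verts V g k) (cp_edges E v g k) \<alpha> =
    (\<Sum>\<kappa>\<in>{\<kappa>\<in>proper_colorings (tail_verts V k) (tail_edges E v k).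
          image_mset \<kappa> (mset_set (tail_verts V k)) \<subseteq># \<alpha>}.
       int (fact (g - 1)) * Dm (g - 1) (\<kappa> (cp_node v k)) (\<alpha> - image_mset \<kappa> (mset_set (tail_verts V k))))"
proof -
  have fV: "finite V" using sg by (simp add: simple_graph_def)
  show ?thesis
    unfolding cp_verts_split[OF g] cp_edges_split[OF g]
    unfolding glue[OF finite_tail[OF fV] tail_disj tail_edges_sub[OF sg v]]
  proof (rule sum.cong[OF refl])
    fix \<kappa>
    let ?m = "g - 1"
    have "{s. length s = ?m \<and> mset s = \<alpha> - image_mset \<kappa> (mset_set (tail_verts V k)) \<and>
             okE {{cp_node v i, cp_node v j} |i j. k \<le> i \<and> i < j \<and> j \<le> k + ?m} (extc \<kappa> s (tail_verts V k) k ?m)}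
        = {s. length s = ?m \<and> mset s = \<alpha> - image_mset \<kappa> (mset_set (tail_verts V k)) \<and>
             distinct (\<kappa> (cp_node v k) # s)}"
      using okE_clique[OF v] by blast
    then show "int (card {s. length s = ?m \<and> mset s = \<alpha> - image_mset \<kappa> (mset_set (tail_verts V k)) \<and>
             okE {{cp_node v i, cp_node v j} |i j. k \<le> i \<and> i < j \<and> j \<le> k + ?m} (extc \<kappa> s (tail_verts V k) k ?m)})
        = int (fact ?m) * Dm ?m (\<kappa> (cp_node v k)) (\<alpha> - image_mset \<kappa> (mset_set (tail_verts V k)))"
      by (simp only: card_distinct_lists)
  qed
qed

theorem proposition3p1:
  fixes V :: "'a set" and E :: "'a set set" and v :: 'a and k g :: nat
  assumes "simple_graph V E" and "v \<in> V" and "g \<ge> 1"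
  shows "csf (cp_verts V g k) (cp_edges E v g k) =
    (\<lambda>\<alpha>. int (fact (g - 1)) *
       (\<Sum>l = 0..g-1. (1 - int l) *
          sf_mult (elem_sf l) (csf (tail_verts V (k+g-1-l)) (tail_edges E v (k+g-1-l))) \<alpha>))"
proof
  fix \<alpha>
  let ?W = "tail_verts V k"
  let ?F = "tail_edges E v k"
  let ?w = "cp_node v k"
  let ?img = "\<lambda>\<kappa>. image_mset \<kappa> (mset_set ?W)"
  let ?C = "\<lambda>\<delta>. {\<kappa>\<in>proper_colorings ?W ?F. ?img \<kappa> \<subseteq># \<delta>}"
  have fV: "finite V" using assms(1) by (simp add: simple_graph_def)
  have finC: "finite (?C \<alpha>)" by (rule finite_C[OF finite_tail[OF fV]])
  have tm: "sf_mult (elem_sf l) (csf (tail_verts V (k+g-1-l)) (tail_edges E v (k+g-1-l))) \<alpha>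
      = (\<Sum>\<kappa>\<in>?C \<alpha>. sf_mult (elem_sf l) (Bc (g - 1 - l) (\<kappa> ?w)) (\<alpha> - ?img \<kappa>))"
    if l: "l \<in> {0..g-1}" for l
  proof -
    have kk: "k + g - 1 - l = k + (g - 1 - l)" using l assms(3) by auto
    have "sf_mult (elem_sf l) (csf (tail_verts V (k+g-1-l)) (tail_edges E v (k+g-1-l))) \<alpha>
        = (\<Sum>\<beta>\<in>{\<beta>. \<beta> \<subseteq># \<alpha>}. elem_sf l \<beta> *
             (\<Sum>\<kappa>\<in>?C (\<alpha> - \<beta>). Bc (g - 1 - l) (\<kappa> ?w) (\<alpha> - \<beta> - ?img \<kappa>)))"
      unfolding sf_mult_def kk tail_csf[OF assms(1,2)] ..
    also have "\<dots> = (\<Sum>\<kappa>\<in>?C \<alpha>. \<Sum>\<beta>\<in>{\<beta>. \<beta> \<subseteq># \<alpha> - ?img \<kappa>}. elem_sf l \<beta> * Bc (g - 1 - l) (\<kappa> ?w) (\<alpha> - ?img \<kappa> - \<beta>))"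
      by (rule swap_conv[OF finC])
    also have "\<dots> = (\<Sum>\<kappa>\<in>?C \<alpha>. sf_mult (elem_sf l) (Bc (g - 1 - l) (\<kappa> ?w)) (\<alpha> - ?img \<kappa>))"
      unfolding sf_mult_def ..
    finally show ?thesis .
  qed
  have "int (fact (g - 1)) * (\<Sum>l = 0..g-1. (1 - int l) *
          sf_mult (elem_sf l) (csf (tail_verts V (k+g-1-l)) (tail_edges E v (k+g-1-l))) \<alpha>)
      = int (fact (g - 1)) * (\<Sum>l = 0..g-1. (1 - int l) *
          (\<Sum>\<kappa>\<in>?C \<alpha>. sf_mult (elem_sf l) (Bc (g - 1 - l) (\<kappa> ?w)) (\<alpha> - ?img \<kappa>)))"
    using tm by simp
  also have "\<dots> = (\<Sum>\<kappa>\<in>?C \<alpha>. int (fact (g - 1)) * (\<Sum>l = 0..g-1. (1 - int l) *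
          sf_mult (elem_sf l) (Bc (g - 1 - l) (\<kappa> ?w)) (\<alpha> - ?img \<kappa>)))"
    by (simp add: sum_distrib_left sum.swap[of _ "?C \<alpha>"])
  also have "\<dots> = (\<Sum>\<kappa>\<in>?C \<alpha>. int (fact (g - 1)) * Dm (g - 1) (\<kappa> ?w) (\<alpha> - ?img \<kappa>))"
    by (simp only: D_ident)
  also have "\<dots> = csf (cp_verts V g k) (cp_edges E v g k) \<alpha>"
    by (rule cp_csf[OF assms, symmetric])
  finally show "csf (cp_verts V g k) (cp_edges E v g k) \<alpha> = int (fact (g - 1)) *
       (\<Sum>l = 0..g-1. (1 - int l) *
          sf_mult (elem_sf l) (csf (tail_verts V (k+g-1-l)) (tail_edges E v (k+g-1-l))) \<alpha>)"
    by simp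
qed

end
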